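(* Let $k$ be a field, $E$ a $k$-vector space of dimension $n$, and $f\in\operatorname{End}_k(E)$ an endomorphism with annihilating (minimal) polynomial $x^n$. Let $e\in E$ be a vector with $f^{n-1}(e)\neq 0$. Then the generalized inverses $g\in\operatorname{End}_k(E)$ of $f$ are exactly the linear maps determined by $$g(f^i(e))=\begin{cases} f^{i-1}(e)+\lambda_i f^{n-1}(e) & \text{if } 1\le i\le n-1,\\ \tilde e & \text{if } i=0,\end{cases}$$ where $\lambda_1,\dots,\lambda_{n-1}\in k$ are arbitrary scalars and $\tilde e\in E$ is an arbitrary vector.
   Context: A generalized inverse of an endomorphism $f$ of $E$ is an endomorphism $g$ of $E$ with $f\circ g\circ f=f$. Here $\{e,f(e),\dots,f^{n-1}(e)\}$ is a basis of $E$. *)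

theory Defs
  imports Complex_Main
begin

definition generalized_inverse ::
  "('a::field \<Rightarrow> 'v::ab_group_add \<Rightarrow> 'v) \<Rightarrow> ('v \<Rightarrow> 'v) \<Rightarrow> ('v \<Rightarrow> 'v) \<Rightarrow> bool" where
  "generalized_inverse scale f g \<longleftrightarrow> Vector_Spaces.linear scale scale g \<and> f \<circ> g \<circ> f = f"

end

theory Submission
  imports Defs
begin

context vector_space
begin

lemma lin_pow:
  assumes "Vector_Spaces.linear scale scale f"
  shows "Vector_Spaces.linear scale scale (f ^^ k)"
proof (induction k)
  case 0
  then show ?case by (simp add: linear_ident)
next
  case (Suc k)
  have "f ^^ Suc k = f \<circ> f ^^ k" by simp
  then show ?case
    using Vector_Spaces.linear_compose[OF Suc assms] by metis
qed

lemma pow_app: "(f ^^ a) ((f ^^ b) x) = (f ^^ (a + b)) x"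
  by (simp add: funpow_add)

lemma pow_big:
  assumes lin: "Vector_Spaces.linear scale scale f" and ann: "f ^^ n = (\<lambda>_. 0)"
    and "n \<le> m"
  shows "(f ^^ m) x = 0"
proof -
  interpret L: Vector_Spaces.linear scale scale "f ^^ (m - n)" using lin_pow[OF lin] .
  have "(f ^^ m) x = (f ^^ (m - n)) ((f ^^ n) x)" using pow_app[where f=f and a="m-n" and b=n and x=x] \<open>n \<le> m\<close> by simp
  then show ?thesis using ann by simp
qed

lemma shift_sum:
  assumes lin: "Vector_Spaces.linear scale scale f" and ann: "f ^^ n = (\<lambda>_. 0)"
    and j: "j < n" and c0: "\<forall>i<j. c i = 0"
  shows "(f ^^ (n - 1 - j)) (\<Sum>i<n. c i *s (f ^^ i) e) = c j *s (f ^^ (n - 1)) e"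
proof -
  interpret L: Vector_Spaces.linear scale scale "f ^^ (n - 1 - j)" using lin_pow[OF lin] .
  have "(f ^^ (n - 1 - j)) (\<Sum>i<n. c i *s (f ^^ i) e) = (\<Sum>i<n. c i *s (f ^^ (n - 1 - j + i)) e)"
    unfolding L.sum L.scale by (simp add: pow_app)
  also have "\<dots> = (\<Sum>i<n. (if i = j then c j *s (f ^^ (n - 1)) e else 0))"
  proof (rule sum.cong[OF refl])
    fix i assume i: "i \<in> {..<n}"
    show "c i *s (f ^^ (n - 1 - j + i)) e = (if i = j then c j *s (f ^^ (n - 1)) e else 0)"
    proof (cases "i < j")
      case True then show ?thesis using c0 by auto
    next
      case False
      show ?thesis
      proof (cases "i = j")
        case True then show ?thesis using j by simp
      next
        case F2: False
        with False have "n \<le> n - 1 - j + i" using j by simp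
        then show ?thesis using pow_big[OF lin ann] F2 by simp
      qed
    qed
  qed
  also have "\<dots> = c j *s (f ^^ (n - 1)) e" using j by simp
  finally show ?thesis .
qed

lemma indep_coeffs:
  assumes lin: "Vector_Spaces.linear scale scale f" and ann: "f ^^ n = (\<lambda>_. 0)"
    and e: "(f ^^ (n - 1)) e \<noteq> 0"
    and s: "(\<Sum>i<n. c i *s (f ^^ i) e) = 0"
  shows "\<forall>i<n. c i = 0"
proof (rule ccontr)
  assume "\<not> (\<forall>i<n. c i = 0)"
  then have ex: "\<exists>i. i < n \<and> c i \<noteq> 0" by auto
  define j where "j = (LEAST i. i < n \<and> c i \<noteq> 0)"
  have j: "j < n \<and> c j \<noteq> 0" using LeastI_ex[OF ex] j_def by simp
  have c0: "\<forall>i<j. c i = 0" using not_less_Least j j_def by fastforce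
  interpret L: Vector_Spaces.linear scale scale "f ^^ (n - 1 - j)" using lin_pow[OF lin] .
  have z: "(f ^^ (n - 1 - j)) 0 = 0" by (rule L.zero)
  have "c j *s (f ^^ (n - 1)) e = 0"
    using z shift_sum[OF lin ann _ c0, of e] j s by simp
  then show False using j e by simp
qed

lemma kernel_coeffs:
  assumes lin: "Vector_Spaces.linear scale scale f" and ann: "f ^^ n = (\<lambda>_. 0)"
    and e: "(f ^^ (n - 1)) e \<noteq> 0"
    and s: "f (\<Sum>i<n. c i *s (f ^^ i) e) = 0"
  shows "\<forall>i<n - 1. c i = 0"
proof (rule ccontr)
  assume "\<not> (\<forall>i<n - 1. c i = 0)"
  then have ex: "\<exists>i. i < n - 1 \<and> c i \<noteq> 0" by auto
  define j where "j = (LEAST i. i < n - 1 \<and> c i \<noteq> 0)"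
  have j: "j < n - 1 \<and> c j \<noteq> 0" using LeastI_ex[OF ex] j_def by simp
  have c0: "\<forall>i<j. c i = 0" using not_less_Least j j_def by fastforce
  interpret L: Vector_Spaces.linear scale scale "f ^^ (n - 2 - j)" using lin_pow[OF lin] .
  have eq: "n - 1 - j = Suc (n - 2 - j)" using j by arith
  have "(f ^^ (n - 1 - j)) (\<Sum>i<n. c i *s (f ^^ i) e) = (f ^^ (n - 2 - j)) (f (\<Sum>i<n. c i *s (f ^^ i) e))"
    unfolding eq funpow_Suc_right by simp
  also have "\<dots> = 0" using s L.zero by simp
  moreover have "j < n" using j by linarith
  note ss = shift_sum[OF lin ann this c0, of e]
  ultimately have "c j *s (f ^^ (n - 1)) e = 0" using ss by simp
  then show False using j e by simp
qed

end

theorem lemma3p7: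
  fixes scale :: "'a::field \<Rightarrow> 'v::ab_group_add \<Rightarrow> 'v"
    and f :: "'v \<Rightarrow> 'v" and e :: 'v and n :: nat
  assumes vs: "vector_space scale"
    and dim: "vector_space.dim scale (UNIV :: 'v set) = n"
    and lin: "Vector_Spaces.linear scale scale f"
    and ann: "f ^^ n = (\<lambda>_. 0)"
    and minimal: "\<forall>m<n. f ^^ m \<noteq> (\<lambda>_. 0)"
    and e: "(f ^^ (n - 1)) e \<noteq> 0"
  shows "{g. generalized_inverse scale f g} =
         {g. Vector_Spaces.linear scale scale g \<and>
             (\<exists>(lam::nat \<Rightarrow> 'a) (e'::'v).
                g e = e' \<and>
                (\<forall>i\<in>{1..n-1}. g ((f ^^ i) e) = (f ^^ (i - 1)) e + scale (lam i) ((f ^^ (n - 1)) e)))}"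
proof -
  interpret V: vector_space scale by (rule vs)
  interpret Lf: Vector_Spaces.linear scale scale f by (rule lin)
  interpret P: vector_space_pair scale scale by unfold_locales
  have n1: "n \<ge> 1"
  proof (rule ccontr)
    assume "\<not> n \<ge> 1"
    then have "n = 0" by simp
    then show False using ann e by (metis funpow_0)
  qed
  define S where "S = (\<lambda>i. (f ^^ i) e) ` {..<n}"
  have inj: "inj_on (\<lambda>i. (f ^^ i) e) {..<n}"
  proof -
    have *: False if ij: "i < j" "j < n" "(f ^^ i) e = (f ^^ j) e" for i j
    proof -
      have "(f ^^ (n - 1 - i)) ((f ^^ i) e) = (f ^^ (n - 1 - i)) ((f ^^ j) e)" using ij by simp
      moreover have "(f ^^ (n - 1 - i)) ((f ^^ i) e) = (f ^^ (n - 1)) e"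
        using V.pow_app[where f=f and a="n-1-i" and b=i and x=e] ij by simp
      moreover have "(f ^^ (n - 1 - i)) ((f ^^ j) e) = (f ^^ (n - 1 - i + j)) e"
        using V.pow_app[where f=f and a="n-1-i" and b=j and x=e] by simp
      ultimately have "(f ^^ (n - 1)) e = (f ^^ (n - 1 - i + j)) e" by simp
      also have "\<dots> = 0" using V.pow_big[OF lin ann] ij by simp
      finally show False using e by simp
    qed
    show ?thesis unfolding inj_on_def
      by (metis * lessThan_iff linorder_neqE_nat)
  qed
  have rep: "\<exists>c. x = (\<Sum>i<n. scale (c i) ((f ^^ i) e))" if "x \<in> V.span S" for x
  proof -
    from that obtain u where u: "(\<Sum>v\<in>S. scale (u v) v) = x"
      using V.span_finite[of S] S_def by auto
    have "(\<Sum>v\<in>S. scale (u v) v) = (\<Sum>i<n. scale (u ((f ^^ i) e)) ((f ^^ i) e))"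
      unfolding S_def by (simp add: sum.reindex[OF inj])
    then show ?thesis using u by metis
  qed
  have indS: "V.independent S"
  proof (rule V.independent_if_scalars_zero)
    show "finite S" unfolding S_def by simp
    fix g x assume s: "(\<Sum>x\<in>S. scale (g x) x) = 0" and x: "x \<in> S"
    have "(\<Sum>i<n. scale (g ((f ^^ i) e)) ((f ^^ i) e)) = 0"
      using s unfolding S_def by (simp add: sum.reindex[OF inj])
    from V.indep_coeffs[OF lin ann e this] x show "g x = 0" unfolding S_def by auto
  qed
  have cardS: "card S = n" unfolding S_def using card_image[OF inj] by simp
  obtain B where B: "V.independent B" "UNIV \<subseteq> V.span B" "card B = n"
    using V.basis_exists[of UNIV] dim by metis
  have finB: "finite B" using B(3) n1 card_ge_0_finite by force
  interpret FD: finite_dimensional_vector_space scale B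
    by unfold_locales (use finB B in auto)
  have spanS: "UNIV \<subseteq> V.span S"
    using FD.card_ge_dim_independent[of S UNIV] indS cardS dim by simp
  have repr: "\<exists>c. x = (\<Sum>i<n. scale (c i) ((f ^^ i) e))" for x
    using rep spanS by auto
  show ?thesis
  proof (rule set_eqI, rule iffI)
    fix g assume "g \<in> {g. generalized_inverse scale f g}"
    then have lg: "Vector_Spaces.linear scale scale g" and fgf: "f \<circ> g \<circ> f = f"
      by (auto simp: generalized_inverse_def)
    interpret Lg: Vector_Spaces.linear scale scale g by (rule lg)
    have "\<exists>l. g ((f ^^ i) e) = (f ^^ (i - 1)) e + scale l ((f ^^ (n - 1)) e)"
      if i: "i \<in> {1..n-1}" for i
    proof -
      define y where "y = g ((f ^^ i) e) - (f ^^ (i - 1)) e"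
      have fi: "(f ^^ i) e = f ((f ^^ (i - 1)) e)"
        using i by (metis Suc_pred' atLeastAtMost_iff funpow.simps(2) comp_apply less_le_trans zero_less_one)
      have "f (g ((f ^^ i) e)) = (f ^^ i) e"
        using fun_cong[OF fgf, of "(f ^^ (i - 1)) e"] fi by simp
      then have fy: "f y = 0" unfolding y_def using fi by (simp add: Lf.diff)
      obtain c where c: "y = (\<Sum>i<n. scale (c i) ((f ^^ i) e))" using repr by blast
      have c0: "\<forall>i<n - 1. c i = 0" using V.kernel_coeffs[OF lin ann e] fy c by simp
      have "y = (\<Sum>k<Suc (n - 1). scale (c k) ((f ^^ k) e))" using c n1 by simp
      also have "\<dots> = scale (c (n - 1)) ((f ^^ (n - 1)) e)"
        using c0 by (simp add: lessThan_Suc)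
      finally show ?thesis unfolding y_def by (metis add_diff_cancel_left' diff_add_cancel)
    qed
    then obtain lam where "\<forall>i\<in>{1..n-1}. g ((f ^^ i) e) = (f ^^ (i - 1)) e + scale (lam i) ((f ^^ (n - 1)) e)"
      by metis
    then show "g \<in> {g. Vector_Spaces.linear scale scale g \<and>
             (\<exists>(lam::nat \<Rightarrow> 'a) (e'::'v).
                g e = e' \<and>
                (\<forall>i\<in>{1..n-1}. g ((f ^^ i) e) = (f ^^ (i - 1)) e + scale (lam i) ((f ^^ (n - 1)) e)))}"
      using lg by blast
  next
    fix g assume "g \<in> {g. Vector_Spaces.linear scale scale g \<and>
             (\<exists>(lam::nat \<Rightarrow> 'a) (e'::'v).
                g e = e' \<and>
                (\<forall>i\<in>{1..n-1}. g ((f ^^ i) e) = (f ^^ (i - 1)) e + scale (lam i) ((f ^^ (n - 1)) e)))}"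
    then obtain lam where lg: "Vector_Spaces.linear scale scale g"
      and gl: "\<forall>i\<in>{1..n-1}. g ((f ^^ i) e) = (f ^^ (i - 1)) e + scale (lam i) ((f ^^ (n - 1)) e)"
      by blast
    interpret Lg: Vector_Spaces.linear scale scale g by (rule lg)
    have l1: "Vector_Spaces.linear scale scale (f \<circ> g \<circ> f)"
      using Vector_Spaces.linear_compose[OF Vector_Spaces.linear_compose[OF lin lg] lin] by (simp add: o_assoc)
    have "(f \<circ> g \<circ> f) x = f x" for x
    proof (rule P.linear_eq_on[OF l1 lin])
      show "x \<in> V.span S" using spanS by auto
      fix b assume "b \<in> S"
      then obtain k where k: "k < n" "b = (f ^^ k) e" unfolding S_def by auto
      have fb: "f b = (f ^^ Suc k) e" using k by simp
      show "(f \<circ> g \<circ> f) b = f b"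
      proof (cases "k = n - 1")
        case True
        then have "f b = 0" using fb ann n1 by (metis Suc_pred' less_le_trans zero_less_one)
        then show ?thesis by simp
      next
        case False
        then have "Suc k \<in> {1..n-1}" using k by auto
        then have "g ((f ^^ Suc k) e) = (f ^^ (Suc k - 1)) e + scale (lam (Suc k)) ((f ^^ (n - 1)) e)"
          using gl by blast
        then have "g (f b) = b + scale (lam (Suc k)) ((f ^^ (n - 1)) e)" using fb k by simp
        moreover have "f ((f ^^ (n - 1)) e) = 0"
          using ann n1 by (metis Suc_pred' funpow.simps(2) comp_apply less_le_trans zero_less_one)
        ultimately show ?thesis by (simp add: Lf.add Lf.scale)
      qed
    qed
    then show "g \<in> {g. generalized_inverse scale f g}"
      using lg by (auto simp: generalized_inverse_def)
  qed
qed

end
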